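(* Let $q$ be a prime power, let $m, c, h, M$ be positive integers with $c < \frac{m-1}{m}M$, and let $r : \mathbb{F}_q \to \mathbb{F}_q$ be a function. Suppose $F_1(X), \ldots, F_m(X) \in \mathbb{F}_q[X]$ satisfy $\deg(F_i) < cq$ and are all $r$-twisted $(h,M)$-pseudopolynomials. Let $k$ be an integer with $$k > \frac{M}{(m-1)M - mc}\cdot (h+1).$$ Then there exist $k$-pseudopolynomials $A_1(X), \ldots, A_m(X) \in \mathbb{F}_q[X]$ with $\deg(A_i) < Mq$, not all zero, such that $$\sum_{i=1}^m A_i(X) F_i(X) = 0.$$
   Context: For $A(X) \in \mathbb{F}_q[X]$, $A^{[\ell]}(X)$ is the $\ell$-th Hasse derivative (the coefficient of $Z^\ell$ in $A(X+Z)$ expanded in powers of $Z$). With $\Lambda(X) = X^q - X$, the $\ell$-th pseudoderivative is $A_{\langle \ell \rangle}(X) = A^{[\ell]}(X) \bmod \Lambda(X)$. The pseudodegree is $\mathsf{pdeg}(A) = \max_{\ell \geq 0}\deg(A_{\langle\ell\rangle})$, and $A$ is a $k$-pseudopolynomial if $\mathsf{pdeg}(A) \leq k$. Given $r : \mathbb{F}_q \to \mathbb{F}_q$, a polynomial $F(X)$ is an $r$-twisted $(h,M)$-pseudopolynomial if for every $\ell$ with $0 \leq \ell < M$ there is $U_\ell(X) \in \mathbb{F}_q[X]$ of degree at most $h$ with $F^{[\ell]}(\alpha) = r(\alpha)\cdot U_\ell(\alpha)$ for all $\alpha \in \mathbb{F}_q$. *)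

theory Defs
  imports "HOL-Library.Cardinality" "HOL-Computational_Algebra.Polynomial" "HOL-Computational_Algebra.Polynomial_Factorial" Complex_Main
begin

(* l-th Hasse derivative: coefficient of Z^l in A(X+Z), computed in (F_q[X])[Z] *)
definition hasse_deriv :: "nat \<Rightarrow> 'a::comm_ring_1 poly \<Rightarrow> 'a poly" where
  "hasse_deriv l A = coeff (pcompose (map_poly (\<lambda>c. [:c:]) A) [:[:0, 1:], 1:]) l"

definition Lam :: "'a::{finite,field} poly" where
  "Lam = monom 1 (CARD('a)) - [:0, 1:]"

definition pseudo_deriv :: "nat \<Rightarrow> 'a::{finite,field} poly \<Rightarrow> 'a poly" where
  "pseudo_deriv l A = hasse_deriv l A mod Lam"

definition pdeg :: "'a::{finite,field} poly \<Rightarrow> nat" where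
  "pdeg A = Max (range (\<lambda>l. degree (pseudo_deriv l A)))"

definition is_pseudopoly :: "nat \<Rightarrow> 'a::{finite,field} poly \<Rightarrow> bool" where
  "is_pseudopoly k A \<longleftrightarrow> pdeg A \<le> k"

definition twisted_pseudopoly ::
  "('a::{finite,field} \<Rightarrow> 'a) \<Rightarrow> nat \<Rightarrow> nat \<Rightarrow> 'a poly \<Rightarrow> bool" where
  "twisted_pseudopoly r h M F \<longleftrightarrow>
     (\<forall>l < M. \<exists>U. degree U \<le> h \<and> (\<forall>\<alpha>. poly (hasse_deriv l F) \<alpha> = r \<alpha> * poly U \<alpha>))"

end

theory Submission
  imports Defs "HOL-Library.FuncSet"
begin

lemma card_ge2: "2 \<le> CARD('a::{finite,field})"
proof -
  have "card {0::'a, 1} = 2" by simp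
  moreover have "card {0::'a, 1} \<le> CARD('a)" by (rule card_mono) auto
  ultimately show ?thesis by simp
qed

lemma fermat: "(x::'a::{finite,field}) ^ CARD('a) = x"
proof (cases "x = 0")
  case True
  have "CARD('a) \<noteq> 0" using card_ge2[where 'a='a] by simp
  then show ?thesis using True by simp
next
  case False
  let ?S = "UNIV - {0::'a}"
  have bij: "bij_betw ((*) x) ?S ?S"
    unfolding bij_betw_def
  proof
    show "inj_on ((*) x) ?S" using False by (auto simp: inj_on_def)
    show "(*) x ` ?S = ?S"
    proof
      show "(*) x ` ?S \<subseteq> ?S" using False by auto
      show "?S \<subseteq> (*) x ` ?S"
      proof
        fix y assume "y \<in> ?S"
        then have "y = x * (y / x)" "y / x \<in> ?S" using False by auto
        then show "y \<in> (*) x ` ?S" by blast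
      qed
    qed
  qed
  have "prod (\<lambda>y. x * y) ?S = prod id ?S"
    using prod.reindex_bij_betw[OF bij, of id] by simp
  moreover have "prod (\<lambda>y. x * y) ?S = x ^ card ?S * prod id ?S"
    by (simp add: prod.distrib)
  moreover have "prod id ?S \<noteq> 0" by simp
  ultimately have "x ^ card ?S = 1" by simp
  moreover have "card ?S = CARD('a) - 1" by (simp add: card_Diff_subset)
  moreover have "CARD('a) = Suc (CARD('a) - 1)" using card_ge2[where 'a='a] by simp
  ultimately show ?thesis by (metis power_Suc mult_1_right)
qed

lemma poly_eq_fin:
  fixes p r :: "'a::{finite,field} poly"
  assumes "\<And>x. poly p x = poly r x" "degree p < CARD('a)" "degree r < CARD('a)"
  shows "p = r"
  by (rule poly_eqI_degree[where A=UNIV]) (use assms in auto)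

lemma Lam_poly: "poly (Lam::'a::{finite,field} poly) a = 0"
  by (simp add: Lam_def poly_monom fermat)

lemma Lam_degree: "degree (Lam::'a::{finite,field} poly) = CARD('a)"
proof -
  have "degree [:0::'a, 1:] < degree (monom (1::'a) CARD('a))"
    using card_ge2[where 'a='a] by (simp add: degree_monom_eq)
  then show ?thesis unfolding Lam_def
    using degree_add_eq_left[of "- [:0::'a, 1:]" "monom 1 CARD('a)"]
    by (simp add: degree_monom_eq del: pCons_0_0 minus_pCons)
qed

lemma Lam_nz: "(Lam::'a::{finite,field} poly) \<noteq> 0"
  using Lam_degree[where 'a='a] card_ge2[where 'a='a] by auto

lemma poly_mod_Lam: "poly (P mod (Lam::'a::{finite,field} poly)) a = poly P a"
proof -
  have "P = P div Lam * Lam + P mod Lam" by simp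
  then have "poly P a = poly (P div Lam * Lam + P mod Lam) a" by metis
  also have "\<dots> = poly (P mod Lam) a" by (simp only: poly_add poly_mult Lam_poly) simp
  finally show ?thesis by simp
qed

lemma degree_mod_Lam_lt: "degree (P mod (Lam::'a::{finite,field} poly)) < CARD('a)"
  using degree_mod_less[OF Lam_nz, of P] Lam_degree[where 'a='a] card_ge2[where 'a='a] by auto

lemma degree_mod_Lam_le:
  fixes P R :: "'a::{finite,field} poly"
  assumes "\<And>a. poly P a = poly R a"
  shows "degree (P mod Lam) \<le> degree R"
proof -
  have eq: "P mod Lam = R mod Lam"
    by (rule poly_eq_fin) (use assms in \<open>auto simp: poly_mod_Lam degree_mod_Lam_lt\<close>)
  show ?thesis
  proof (cases "degree R < CARD('a)")
    case True
    then have "R mod Lam = R" by (intro mod_poly_less) (simp add: Lam_degree)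
    then show ?thesis using eq by simp
  next
    case False
    then show ?thesis using eq degree_mod_Lam_lt[of R] by simp
  qed
qed



lemma hasse_eval: "poly (hasse_deriv l A) a = coeff (pcompose A [:a, 1:]) l"
proof (induction A arbitrary: l rule: pCons_induct)
  case 0
  then show ?case by (simp add: hasse_deriv_def)
next
  case (pCons b p)
  have T: "pcompose (map_poly (\<lambda>c. [:c:]) (pCons b p)) [:[:0, 1:], 1:]
     = [:[:b:]:] + smult [:0, 1:] (pcompose (map_poly (\<lambda>c. [:c:]) p) [:[:0, 1:], 1:])
       + pCons 0 (pcompose (map_poly (\<lambda>c. [:c:]) p) [:[:0, 1:], 1:])"
    by (simp add: map_poly_pCons pcompose_pCons algebra_simps)
  have R: "pcompose (pCons b p) [:a, 1:] = [:b:] + smult a (pcompose p [:a, 1:]) + pCons 0 (pcompose p [:a, 1:])"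
    by (simp add: pcompose_pCons algebra_simps)
  show ?case
  proof (cases l)
    case 0
    then show ?thesis using pCons.IH[of 0]
      by (simp add: hasse_deriv_def T R)
  next
    case (Suc l')
    then show ?thesis using pCons.IH[of l] pCons.IH[of l']
      by (simp add: hasse_deriv_def T R)
  qed
qed



lemma pcompose_pow: "pcompose (p ^ n) r = (pcompose p r) ^ n"
  by (induction n) (simp_all add: pcompose_mult pcompose_1)

lemma pcompose_monom1: "pcompose (monom 1 n) [:a, 1:] = [:a::'a::comm_ring_1, 1:] ^ n"
proof -
  have "monom (1::'a) n = [:0, 1:] ^ n" by (simp add: monom_altdef)
  then show ?thesis by (simp add: pcompose_pow pcompose_pCons)
qed

lemma coeff_lin_pow: "coeff ([:a::'a::comm_ring_1, 1:] ^ s) b = of_nat (s choose b) * a ^ (s - b)"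
proof (cases "b \<le> s")
  case True
  then show ?thesis using coeff_linear_poly_power[OF True, of a 1] by simp
next
  case False
  then have "coeff ([:a, 1:] ^ s) b = 0" by (intro coeff_eq_0) (simp add: degree_linear_power)
  moreover have "s choose b = 0" using False by simp
  ultimately show ?thesis by (metis mult_zero_left of_nat_0)
qed

lemma shift_pow_card: "[:a::'a::{finite,field}, 1:] ^ CARD('a) = monom 1 CARD('a) + [:a:]"
proof (rule poly_eqI_degree_lead_coeff[where n="CARD('a)" and A=UNIV])
  show "coeff ([:a, 1:] ^ CARD('a)) CARD('a) = coeff (monom 1 CARD('a) + [:a:]) CARD('a)"
    using card_ge2[where 'a='a] by (simp add: coeff_linear_power coeff_pCons split: nat.split)
  show "CARD('a) \<le> card (UNIV::'a set)" by simp
  show "degree ([:a, 1:] ^ CARD('a)) \<le> CARD('a)" by (simp add: degree_linear_power)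
  show "degree (monom 1 CARD('a) + [:a:]) \<le> CARD('a)"
    by (intro degree_add_le) (auto simp: degree_monom_le)
  fix z
  show "poly ([:a, 1:] ^ CARD('a)) z = poly (monom 1 CARD('a) + [:a:]) z"
    by (simp add: poly_monom fermat)
qed

lemma Lam_shift: "pcompose (Lam::'a::{finite,field} poly) [:a, 1:] = Lam"
  unfolding Lam_def by (simp add: pcompose_diff pcompose_monom1 shift_pow_card pcompose_pCons)

lemma ev_basis:
  "coeff (pcompose ((Lam::'a::{finite,field} poly) ^ j * monom 1 s) [:a, 1:]) l
   = (\<Sum>i\<le>l. coeff (Lam ^ j) i * (of_nat (s choose (l - i)) * a ^ (s - (l - i))))"
  by (simp add: pcompose_mult pcompose_pow Lam_shift pcompose_monom1 coeff_mult coeff_lin_pow)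



lemma prod_lin_dvd:
  fixes G :: "'a::field poly"
  assumes "finite S" "\<forall>a\<in>S. [:-a, 1:] ^ n dvd G"
  shows "(\<Prod>a\<in>S. [:-a, 1:] ^ n) dvd G"
  using assms
proof (induction S arbitrary: G rule: finite_induct)
  case empty
  then show ?case by simp
next
  case (insert x S)
  show ?case
  proof (cases "G = 0")
    case True
    then show ?thesis by simp
  next
    case False
    obtain H where H: "G = [:-x, 1:] ^ n * H" using insert.prems by (auto simp: dvd_def)
    have HS: "\<forall>a\<in>S. [:-a, 1:] ^ n dvd H"
    proof
      fix a assume aS: "a \<in> S"
      then have ax: "a \<noteq> x" using insert.hyps by auto
      have "n \<le> order a G" using insert.prems aS False by (simp add: order_divides)
      also have "order a G = order a ([:-x, 1:] ^ n) + order a H"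
        using False H by (simp add: order_mult)
      also have "order a ([:-x, 1:] ^ n) = 0" using ax by (intro order_0I) simp
      finally have "n \<le> order a H" by simp
      then show "[:-a, 1:] ^ n dvd H" by (simp add: order_divides)
    qed
    have "(\<Prod>a\<in>S. [:-a, 1:] ^ n) dvd H" using insert.IH HS by blast
    then show ?thesis using insert.hyps H by (simp add: mult_dvd_mono)
  qed
qed

lemma vanish:
  fixes G :: "'a::{finite,field} poly"
  assumes "\<And>a l. l < M \<Longrightarrow> coeff (pcompose G [:a, 1:]) l = 0"
    and "degree G < M * CARD('a)"
  shows "G = 0"
proof (rule ccontr)
  assume G0: "G \<noteq> 0"
  have dv: "[:-a, 1:] ^ M dvd G" for a
  proof -
    have "monom 1 M dvd pcompose G [:a, 1:]"
      using assms(1) by (simp add: monom_1_dvd_iff')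
    then obtain H where H: "pcompose G [:a, 1:] = monom 1 M * H" by (auto simp: dvd_def)
    have "pcompose [:a, 1:] [:-a, 1:] = [:0, 1::'a:]" by (simp add: pcompose_pCons)
    then have "G = pcompose (pcompose G [:a, 1:]) [:-a, 1:]"
      by (metis pcompose_assoc pcompose_idR)
    also have "\<dots> = [:-a, 1:] ^ M * pcompose H [:-a, 1:]"
      by (simp add: H pcompose_mult pcompose_monom1)
    finally show ?thesis by (metis dvd_triv_left)
  qed
  have "(\<Prod>a\<in>UNIV. [:-a, 1:] ^ M) dvd G"
    by (rule prod_lin_dvd) (use dv in auto)
  then have "degree (\<Prod>a\<in>(UNIV::'a set). [:-a, 1:] ^ M) \<le> degree G"
    using G0 by (rule dvd_imp_degree_le)
  moreover have "degree (\<Prod>a\<in>(UNIV::'a set). [:-a, 1:] ^ M) = M * CARD('a)"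
    by (subst degree_prod_sum_eq) (simp_all add: degree_power_eq)
  ultimately show False using assms(2) by simp
qed



lemma deg_comb:
  fixes r :: "nat \<Rightarrow> 'a::{finite,field} poly"
  assumes "\<forall>j. degree (r j) < CARD('a)" "N > 0"
  shows "degree (\<Sum>j<N. Lam ^ j * r j) < N * CARD('a)"
proof (rule degree_sum_less)
  fix j assume "j \<in> {..<N}"
  then have jN: "Suc j \<le> N" by simp
  have "degree (Lam ^ j * r j) \<le> degree ((Lam::'a poly) ^ j) + degree (r j)" using degree_mult_le by blast
  also have "degree ((Lam::'a poly) ^ j) = j * CARD('a)"
    using Lam_nz[where 'a='a] Lam_degree[where 'a='a] by (simp add: degree_power_eq)
  finally have "degree (Lam ^ j * r j) < Suc j * CARD('a)" using assms(1)[rule_format, of j] by simp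
  also have "\<dots> \<le> N * CARD('a)" using jN by (intro mult_le_mono1)
  finally show "degree (Lam ^ j * r j) < N * CARD('a)" .
qed (use assms card_ge2[where 'a='a] in simp)

lemma indep:
  fixes r :: "nat \<Rightarrow> 'a::{finite,field} poly"
  assumes "\<forall>j. degree (r j) < CARD('a)" "(\<Sum>j<N. Lam ^ j * r j) = 0"
  shows "\<forall>j<N. r j = 0"
  using assms(2)
proof (induction N)
  case 0
  then show ?case by simp
next
  case (Suc N)
  let ?S = "\<Sum>j<N. Lam ^ j * r j"
  have eq: "?S = - (Lam ^ N * r N)" using Suc.prems by (simp add: eq_neg_iff_add_eq_0)
  have rN: "r N = 0"
  proof (rule ccontr)
    assume nz: "r N \<noteq> 0"
    have "degree ((Lam::'a poly) ^ N * r N) = N * CARD('a) + degree (r N)"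
      using nz Lam_nz[where 'a='a] Lam_degree[where 'a='a] by (simp add: degree_mult_eq degree_power_eq)
    then have d: "degree ?S \<ge> N * CARD('a)" using eq by simp
    have "Lam ^ N * r N \<noteq> 0" using nz Lam_nz[where 'a='a] by simp
    then have "?S \<noteq> 0" using eq by simp
    then have "N > 0" by (cases N) auto
    then have "degree ?S < N * CARD('a)" using deg_comb assms(1) by blast
    then show False using d by simp
  qed
  then have "?S = 0" using eq by simp
  then have "\<forall>j<N. r j = 0" by (rule Suc.IH)
  then show ?case using rN by (auto simp: less_Suc_eq)
qed



definition Acoef :: "nat \<Rightarrow> nat \<Rightarrow> (nat \<times> nat \<times> nat \<Rightarrow> 'a) \<Rightarrow> nat \<Rightarrow> 'a::{finite,field} poly" where
  "Acoef N dd c i = (\<Sum>j<N. \<Sum>s<dd. smult (c (i, j, s)) (Lam ^ j * monom 1 s))"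

definition Rp :: "nat \<Rightarrow> nat \<Rightarrow> (nat \<times> nat \<times> nat \<Rightarrow> 'a) \<Rightarrow> nat \<Rightarrow> nat \<Rightarrow> 'a::{finite,field} poly" where
  "Rp N dd c i l = (\<Sum>j<N. \<Sum>s<dd. smult (c (i, j, s))
     (\<Sum>t\<le>l. smult (coeff (Lam ^ j) t * of_nat (s choose (l - t))) (monom 1 (s - (l - t)))))"

definition QQ :: "nat \<Rightarrow> (nat \<Rightarrow> nat \<Rightarrow> 'a poly) \<Rightarrow> (nat \<Rightarrow> 'a::{finite,field} poly) \<Rightarrow> nat \<Rightarrow> 'a \<Rightarrow> 'a" where
  "QQ m U X l a = (\<Sum>i\<in>{1..m}. \<Sum>l1\<le>l. coeff (pcompose (X i) [:a, 1:]) l1 * poly (U i (l - l1)) a)"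

definition Qp :: "nat \<Rightarrow> nat \<Rightarrow> nat \<Rightarrow> (nat \<Rightarrow> nat \<Rightarrow> 'a poly) \<Rightarrow> (nat \<times> nat \<times> nat \<Rightarrow> 'a) \<Rightarrow> nat \<Rightarrow> 'a::{finite,field} poly" where
  "Qp m N dd U c l = (\<Sum>i\<in>{1..m}. \<Sum>l1\<le>l. Rp N dd c i l1 * U i (l - l1))"

lemma ev_Acoef: "coeff (pcompose (Acoef N dd c i) [:a, 1:]) l = poly (Rp N dd c i l) a"
  by (simp add: Acoef_def Rp_def pcompose_sum pcompose_smult coeff_sum ev_basis poly_sum poly_monom
      sum_distrib_left mult.assoc)

lemma deg_Rp: "degree (Rp N dd c i l) \<le> dd - 1"
proof -
  have inner: "degree (\<Sum>t\<le>l. smult (coeff (Lam ^ j) t * of_nat (s choose (l - t))) (monom (1::'a::{finite,field}) (s - (l - t)))) \<le> dd - 1"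
    if "s < dd" for j s
  proof (rule degree_sum_le)
    fix t
    have "s - (l - t) \<le> dd - 1" using that by auto
    then show "degree (smult (coeff (Lam ^ j) t * of_nat (s choose (l - t))) (monom (1::'a) (s - (l - t)))) \<le> dd - 1"
      by (meson degree_monom_le degree_smult_le order.trans)
  qed simp
  show ?thesis unfolding Rp_def
    by (intro degree_sum_le finite_lessThan order.trans[OF degree_smult_le] inner) auto
qed

lemma QQ_Acoef: "QQ m U (Acoef N dd c) l a = poly (Qp m N dd U c l) a"
  by (simp add: QQ_def Qp_def ev_Acoef poly_sum)

lemma deg_Qp:
  assumes "\<forall>i l. degree (U i l) \<le> h"
  shows "degree (Qp m N dd U c l) \<le> dd - 1 + h"
  unfolding Qp_def
proof (intro degree_sum_le)
  fix i l1
  have "degree (Rp N dd c i l1 * U i (l - l1)) \<le> degree (Rp N dd c i l1) + degree (U i (l - l1))"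
    by (rule degree_mult_le)
  also have "\<dots> \<le> dd - 1 + h" using deg_Rp[of N dd c i l1] assms by (intro add_mono) auto
  finally show "degree (Rp N dd c i l1 * U i (l - l1)) \<le> dd - 1 + h" .
qed auto

lemma QQ_diff: "QQ m U (\<lambda>i. X i - Y i) l a = QQ m U X l a - QQ m U Y l a"
  by (simp add: QQ_def pcompose_diff left_diff_distrib sum_subtractf)

lemma Acoef_diff: "Acoef N dd (\<lambda>x. c1 x - c2 x) i = Acoef N dd c1 i - Acoef N dd c2 i"
  by (simp add: Acoef_def smult_diff_left sum_subtractf)

lemma Acoef_alt: "Acoef N dd c i = (\<Sum>j<N. Lam ^ j * (\<Sum>s<dd. smult (c (i, j, s)) (monom 1 s)))"
  by (simp add: Acoef_def sum_distrib_left mult_smult_right)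

lemma G_ev:
  fixes F :: "nat \<Rightarrow> 'a::{finite,field} poly"
  assumes "\<forall>i\<in>{1..m}. \<forall>l'<M. \<forall>a. poly (hasse_deriv l' (F i)) a = r a * poly (U i l') a"
    and "l < M"
  shows "coeff (pcompose (\<Sum>i\<in>{1..m}. X i * F i) [:a, 1:]) l = r a * QQ m U X l a"
proof -
  have "coeff (pcompose (\<Sum>i\<in>{1..m}. X i * F i) [:a, 1:]) l
     = (\<Sum>i\<in>{1..m}. \<Sum>l1\<le>l. coeff (pcompose (X i) [:a, 1:]) l1 * coeff (pcompose (F i) [:a, 1:]) (l - l1))"
    by (simp add: pcompose_sum pcompose_mult coeff_sum coeff_mult)
  also have "\<dots> = (\<Sum>i\<in>{1..m}. \<Sum>l1\<le>l. coeff (pcompose (X i) [:a, 1:]) l1 * (r a * poly (U i (l - l1)) a))"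
  proof (intro sum.cong refl)
    fix i l1 assume "i \<in> {1..m}" "l1 \<in> {..l}"
    then have "coeff (pcompose (F i) [:a, 1:]) (l - l1) = r a * poly (U i (l - l1)) a"
      using assms by (simp add: hasse_eval[symmetric])
    then show "coeff (pcompose (X i) [:a, 1:]) l1 * coeff (pcompose (F i) [:a, 1:]) (l - l1)
      = coeff (pcompose (X i) [:a, 1:]) l1 * (r a * poly (U i (l - l1)) a)" by simp
  qed
  also have "\<dots> = r a * QQ m U X l a"
    by (simp add: QQ_def sum_distrib_left algebra_simps)
  finally show ?thesis .
qed



lemma arith_facts:
  fixes m c h M k :: nat
  assumes "m > 0" "M > 0"
    and "real c < (real m - 1) / real m * real M"
    and "real k > real M / ((real m - 1) * real M - real m * real c) * (real h + 1)"
  shows "m * c + M < m * M" "M * (h + 1) + k * (m * c) + k * M < k * (m * M)"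
proof -
  have mpos: "real m > 0" using assms by simp
  from assms(3) have "real m * real c < (real m - 1) * real M"
    using mpos by (simp add: field_simps)
  then have 1: "real m * real c + real M < real m * real M" by (simp add: algebra_simps)
  then show "m * c + M < m * M" by (metis of_nat_add of_nat_less_iff of_nat_mult)
  have D: "(real m - 1) * real M - real m * real c > 0" using 1 by (simp add: algebra_simps)
  from assms(4) have "real M * (real h + 1) < real k * ((real m - 1) * real M - real m * real c)"
    using D by (simp add: field_simps)
  then have "real M * (real h + 1) + real k * (real m * real c) + real k * real M < real k * (real m * real M)"
    by (simp add: algebra_simps)
  then show "M * (h + 1) + k * (m * c) + k * M < k * (m * M)"
    by (metis of_nat_add of_nat_less_iff of_nat_mult of_nat_1)
qed



theorem lemma5p6:
  fixes F :: "nat \<Rightarrow> 'a::{finite,field} poly"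
    and r :: "'a \<Rightarrow> 'a"
    and m c h M k :: nat
  assumes "m > 0" "c > 0" "h > 0" "M > 0"
    and "real c < (real m - 1) / real m * real M"
    and "\<forall>i\<in>{1..m}. degree (F i) < c * CARD('a)"
    and "\<forall>i\<in>{1..m}. twisted_pseudopoly r h M (F i)"
    and "real k > real M / ((real m - 1) * real M - real m * real c) * (real h + 1)"
  shows "\<exists>A :: nat \<Rightarrow> 'a poly.
           (\<forall>i\<in>{1..m}. is_pseudopoly k (A i) \<and> degree (A i) < M * CARD('a))
         \<and> (\<exists>i\<in>{1..m}. A i \<noteq> 0)
         \<and> (\<Sum>i=1..m. A i * F i) = 0"
proof -
  define q where "q = CARD('a)"
  have q2: "2 \<le> q" using card_ge2[where 'a='a] by (simp add: q_def)
  note ar = arith_facts[OF assms(1) assms(4) assms(5) assms(8)]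
  have "m * c < m * M" using ar(1) by linarith
  then have cM: "c < M" by simp
  define N where "N = M - c"
  have N0: "N > 0" and NcM: "N + c = M" using cM by (auto simp: N_def)
  have mN: "m * N + m * c = m * M" using NcM by (metis add_mult_distrib2)
  have k0: "k > 0"
  proof (rule ccontr)
    assume "\<not> k > 0"
    then have "k = 0" by simp
    then show False using ar(2) by simp
  qed
  define dd where "dd = min k q"
  have dd1: "dd \<ge> 1" and ddk: "dd \<le> k" and ddq: "dd \<le> q" using k0 q2 by (auto simp: dd_def)
  define U where "U = (\<lambda>i l. if i \<in> {1..m} \<and> l < M then
      (SOME V. degree V \<le> h \<and> (\<forall>a. poly (hasse_deriv l (F i)) a = r a * poly V a)) else 0)"
  have Uspec: "degree (U i l) \<le> h \<and> (\<forall>a. poly (hasse_deriv l (F i)) a = r a * poly (U i l) a)"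
    if "i \<in> {1..m}" "l < M" for i l
  proof -
    have ex: "\<exists>V. degree V \<le> h \<and> (\<forall>a. poly (hasse_deriv l (F i)) a = r a * poly V a)"
      using assms(7) that unfolding twisted_pseudopoly_def by blast
    have eq: "U i l = (SOME V. degree V \<le> h \<and> (\<forall>a. poly (hasse_deriv l (F i)) a = r a * poly V a))"
      using that unfolding U_def by (simp only: if_True conj_absorb simp_thms)
    show ?thesis unfolding eq by (rule someI_ex[OF ex])
  qed
  have Uh: "\<forall>i l. degree (U i l) \<le> h"
  proof (intro allI)
    fix i l
    show "degree (U i l) \<le> h"
    proof (cases "i \<in> {1..m} \<and> l < M")
      case True
      then show ?thesis using Uspec by blast
    next
      case False
      then have "U i l = 0" unfolding U_def by (simp only: if_False)
      then show ?thesis by simp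
    qed
  qed
  have Uev: "\<forall>i\<in>{1..m}. \<forall>l'<M. \<forall>a. poly (hasse_deriv l' (F i)) a = r a * poly (U i l') a"
    using Uspec by blast
  define I where "I = {1..m} \<times> {..<N} \<times> {..<dd}"
  define Dom where "Dom = PiE I (\<lambda>_. UNIV :: 'a set)"
  define ED where "ED = dd - 1 + h"
  define SE where "SE = (\<lambda>v. poly (\<Sum>i\<le>ED. monom (v i) i)) ` PiE {..ED} (\<lambda>_. UNIV::'a set)"
  define Cod where "Cod = PiE {..<M} (\<lambda>_. SE)"
  define Phi where "Phi = (\<lambda>c. restrict (\<lambda>l. poly (Qp m N dd U c l)) {..<M})"
  have finI: "finite I" by (simp add: I_def)
  have cardDom: "card Dom = q ^ (m * N * dd)"
    by (simp add: Dom_def card_PiE finI I_def card_cartesian_product q_def mult.assoc)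
  have cardSE1: "card SE \<le> q ^ (Suc ED)"
  proof -
    have "card SE \<le> card (PiE {..ED} (\<lambda>_. UNIV::'a set))"
      unfolding SE_def by (rule card_image_le) (simp add: finite_PiE)
    also have "\<dots> = q ^ (Suc ED)" by (simp add: card_PiE q_def)
    finally show ?thesis .
  qed
  have finSE: "finite SE" by (rule finite_subset[of _ UNIV]) auto
  have cardSE2: "card SE \<le> q ^ q"
  proof -
    have "card SE \<le> CARD('a \<Rightarrow> 'a)" by (rule card_mono) auto
    then show ?thesis by (simp add: card_fun q_def)
  qed
  have cardCod: "card Cod = card SE ^ M" by (simp add: Cod_def card_PiE)
  have ineq: "card Cod < card Dom"
  proof -
    define B where "B = min (Suc ED) q"
    have "card SE \<le> q ^ B" using cardSE1 cardSE2 by (simp add: B_def min_def)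
    then have "card Cod \<le> (q ^ B) ^ M" by (simp add: cardCod power_mono)
    also have "\<dots> = q ^ (B * M)" by (simp add: power_mult)
    also have "\<dots> < q ^ (m * N * dd)"
    proof (rule power_strict_increasing)
      show "1 < q" using q2 by simp
      show "B * M < m * N * dd"
      proof (cases "k \<le> q")
        case True
        then have "dd = k" by (simp add: dd_def)
        then have "B \<le> k + h" using dd1 by (simp add: B_def ED_def)
        then have "B * M \<le> (k + h) * M" by simp
        also have "\<dots> < m * N * k"
        proof -
          have e: "k * (m * N) + k * (m * c) = k * (m * M)" using mN by (metis add_mult_distrib2)
          have gen: "\<And>X Y Z W P::nat. X + Y + Z < W \<Longrightarrow> P + Y = W \<Longrightarrow> X + Z < P" by arith
          have "M * (h + 1) + k * M < k * (m * N)" by (rule gen[OF ar(2) e])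
          moreover have "(k + h) * M \<le> M * (h + 1) + k * M" by (simp add: algebra_simps)
          ultimately have "(k + h) * M < k * (m * N)" by (rule le_less_trans[rotated])
          then show ?thesis by (simp add: mult.commute mult.left_commute)
        qed
        finally show ?thesis using \<open>dd = k\<close> by simp
      next
        case False
        then have "dd = q" by (simp add: dd_def)
        then have "B \<le> q" by (simp add: B_def)
        then have "B * M \<le> q * M" by simp
        also have "\<dots> < q * (m * N)" using ar(1) mN q2 by simp
        finally show ?thesis using \<open>dd = q\<close> by (simp add: algebra_simps)
      qed
    qed
    finally show ?thesis using cardDom by simp
  qed
  have maps: "Phi ` Dom \<subseteq> Cod"
  proof
    fix y assume "y \<in> Phi ` Dom"
    then obtain cc where y: "y = Phi cc" by auto
    have "poly (Qp m N dd U cc l) \<in> SE" for l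
    proof -
      let ?P = "Qp m N dd U cc l"
      have dP: "degree ?P \<le> ED" using deg_Qp[OF Uh] by (simp add: ED_def)
      have "poly ?P = poly (\<Sum>i\<le>ED. monom (restrict (coeff ?P) {..ED} i) i)"
        using poly_as_sum_of_monoms'[OF dP] by simp
      moreover have "restrict (coeff ?P) {..ED} \<in> PiE {..ED} (\<lambda>_. UNIV)" by simp
      ultimately show ?thesis unfolding SE_def by blast
    qed
    then show "y \<in> Cod" unfolding y Phi_def Cod_def by (simp add: restrict_PiE_iff)
  qed
  have "\<not> inj_on Phi Dom"
  proof
    assume "inj_on Phi Dom"
    then have "card Dom \<le> card Cod"
      using maps by (intro card_inj_on_le) (auto simp: Cod_def finite_PiE finSE)
    then show False using ineq by simp
  qed
  then obtain c1 c2 where c1: "c1 \<in> Dom" and c2: "c2 \<in> Dom" and neq: "c1 \<noteq> c2" and eqP: "Phi c1 = Phi c2"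
    unfolding inj_on_def by blast
  define cd where "cd = (\<lambda>x. c1 x - c2 x)"
  define A where "A = Acoef N dd cd"
  define rr where "rr = (\<lambda>i j. (\<Sum>s<dd. smult (cd (i, j, s)) (monom 1 s)) :: 'a poly)"
  have rr_deg: "\<forall>j. degree (rr i j) < CARD('a)" for i
  proof
    fix j
    have "degree (rr i j) \<le> dd - 1" unfolding rr_def
      by (intro degree_sum_le finite_lessThan order.trans[OF degree_smult_le] order.trans[OF degree_monom_le]) auto
    then show "degree (rr i j) < CARD('a)" using ddq dd1 by (simp add: q_def)
  qed
  have A_alt: "A i = (\<Sum>j<N. Lam ^ j * rr i j)" for i
    by (simp add: A_def rr_def Acoef_alt)
  have A_diff: "A = (\<lambda>i. Acoef N dd c1 i - Acoef N dd c2 i)"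
    by (rule ext) (simp add: A_def cd_def Acoef_diff)
  show ?thesis
  proof (intro exI[of _ A] conjI ballI)
    fix i assume i: "i \<in> {1..m}"
    have "\<forall>l. degree (pseudo_deriv l (A i)) \<le> k"
    proof
      fix l
      have "degree (pseudo_deriv l (A i)) \<le> degree (Rp N dd cd i l)"
        unfolding pseudo_deriv_def
        by (rule degree_mod_Lam_le) (simp add: hasse_eval A_def ev_Acoef)
      also have "\<dots> \<le> k" using deg_Rp[of N dd cd i l] ddk by simp
      finally show "degree (pseudo_deriv l (A i)) \<le> k" .
    qed
    then show "is_pseudopoly k (A i)"
      unfolding is_pseudopoly_def pdeg_def
      by (intro Max.boundedI) (auto intro: finite_subset[of _ "{..k}"])
    show "degree (A i) < M * CARD('a)"
    proof -
      have "degree (A i) < N * CARD('a)" unfolding A_alt by (rule deg_comb[OF rr_deg N0])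
      also have "\<dots> \<le> M * CARD('a)" using NcM by simp
      finally show ?thesis .
    qed
  next
    obtain x where x: "x \<in> I" "c1 x \<noteq> c2 x" using PiE_ext[OF c1[unfolded Dom_def] c2[unfolded Dom_def]] neq by blast
    then obtain i j0 s0 where xe: "x = (i, j0, s0)" and i: "i \<in> {1..m}" and j0: "j0 < N" and s0: "s0 < dd"
      by (auto simp: I_def)
    have "A i \<noteq> 0"
    proof
      assume "A i = 0"
      then have "\<forall>j<N. rr i j = 0" using indep[OF rr_deg] A_alt by metis
      then have "coeff (rr i j0) s0 = 0" using j0 by simp
      moreover have "coeff (rr i j0) s0 = cd (i, j0, s0)" using s0 by (simp add: rr_def coeff_sum if_distrib[of "(*) _"] sum.delta' cong: if_cong)
      ultimately show False using x xe by (simp add: cd_def)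
    qed
    then show "\<exists>i\<in>{1..m}. A i \<noteq> 0" using i by blast
  next
    show "(\<Sum>i = 1..m. A i * F i) = 0"
    proof (rule vanish[where M=M])
      fix a l assume l: "l < M"
      have "coeff (pcompose (\<Sum>i = 1..m. A i * F i) [:a, 1:]) l = r a * QQ m U A l a"
        by (rule G_ev[OF Uev l])
      also have "QQ m U A l a = poly (Qp m N dd U c1 l) a - poly (Qp m N dd U c2 l) a"
        by (simp add: A_diff QQ_diff QQ_Acoef)
      also have "poly (Qp m N dd U c1 l) = poly (Qp m N dd U c2 l)"
        using fun_cong[OF eqP, of l] l by (simp add: Phi_def)
      finally show "coeff (pcompose (\<Sum>i = 1..m. A i * F i) [:a, 1:]) l = 0" by simp
    next
      show "degree (\<Sum>i = 1..m. A i * F i) < M * CARD('a)"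
      proof (rule degree_sum_less)
        fix i assume i: "i \<in> {1..m}"
        have dA: "degree (A i) < N * CARD('a)" unfolding A_alt by (rule deg_comb[OF rr_deg N0])
        have dF: "degree (F i) < c * CARD('a)" using assms(6) i by blast
        have "degree (A i * F i) \<le> degree (A i) + degree (F i)" by (rule degree_mult_le)
        also have "\<dots> < N * CARD('a) + c * CARD('a)" using dA dF by simp
        also have "\<dots> = M * CARD('a)" using NcM by (metis add_mult_distrib)
        finally show "degree (A i * F i) < M * CARD('a)" .
      qed (use assms(4) q2 in \<open>simp add: q_def\<close>)
    qed
  qed
qed


end
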